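(* Let $n\ge1$. A valid configuration in $\Omega'_n$ contains neither of the junction tiles $j_n^{0,0,1,1}$ and $j_n^{1,1,0,0}$.
   Context: $V_n=\{(v_0,v_1,v_2)\in\mathbb{Z}^3: 0\le v_0\le v_1\le 1,\ v_1\le v_2\le n+1\}$, elements written as words $v_0v_1v_2$. A Wang tile is $t=(a,b,c,d)$ with $\mathrm{RIGHT}(t)=a$, $\mathrm{TOP}(t)=b$, $\mathrm{LEFT}(t)=c$, $\mathrm{BOTTOM}(t)=d$; $\hat t=(b,a,d,c)$, $\hat S=\{\hat t:t\in S\}$. Define (as (right, top, left, bottom)): $W_n=\{(11(i+1),11(j+1),11i,11j):1\le i,j\le n\}$; $B'_n=\{(00(i+1),111,00i,11n):0\le i\le n\}$; $G_n=\{(01(i+1),111,00i,11(n+1)):0\le i\le n\}$; $Y_n=\{(01(i+1),112,01i,11(n+1)):1\le i\le n\}$; $A_n=\{(00(i+1),112,01i,11n):1\le i\le n\}$; $j_n^{k,l,r,s}=((0,k,l),(0,r,s),(0,s,r+n),(0,l,k+n))$ for $(k,l),(r,s)\in\{(0,0),(0,1),(1,1)\}$ (so $j_n^{0,0,1,1}=(000,011,01(n+1),00n)$ and $j_n^{1,1,0,0}=(011,000,00n,01(n+1))$); $J'_n$ is the set of these 9 tiles. $\mathcal T'_n=W_n\cup B'_n\cup G_n\cup Y_n\cup A_n\cup\hat B'_n\cup\hat G_n\cup\hat Y_n\cup\hat A_n\cup J'_n$. $\Omega'_n$ is the set of configurations $c:\mathbb Z^2\to\mathcal T'_n$ with $\mathrm{RIGHT}(c(\mathbf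 m))=\mathrm{LEFT}(c(\mathbf m+\mathbf e_1))$ and $\mathrm{TOP}(c(\mathbf m))=\mathrm{BOTTOM}(c(\mathbf m+\mathbf e_2))$ for all $\mathbf m$. *)

theory Defs
  imports Main
begin

type_synonym label = "int \<times> int \<times> int"
type_synonym tile = "label \<times> label \<times> label \<times> label"

definition Vn :: "nat \<Rightarrow> label set" where
  "Vn n = {(v0, v1, v2). 0 \<le> v0 \<and> v0 \<le> v1 \<and> v1 \<le> 1 \<and> v1 \<le> v2 \<and> v2 \<le> int n + 1}"

definition RIGHT :: "tile \<Rightarrow> label" where "RIGHT t = (case t of (a,b,c,d) \<Rightarrow> a)"
definition TOP :: "tile \<Rightarrow> label" where "TOP t = (case t of (a,b,c,d) \<Rightarrow> b)"
definition LEFT :: "tile \<Rightarrow> label" where "LEFT t = (case t of (a,b,c,d) \<Rightarrow> c)"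
definition BOTTOM :: "tile \<Rightarrow> label" where "BOTTOM t = (case t of (a,b,c,d) \<Rightarrow> d)"

definition hat :: "tile \<Rightarrow> tile" where
  "hat t = (case t of (a,b,c,d) \<Rightarrow> (b,a,d,c))"

definition Wn :: "nat \<Rightarrow> tile set" where
  "Wn n = {((1,1,i+1),(1,1,j+1),(1,1,i),(1,1,j)) | i j. 1 \<le> i \<and> i \<le> int n \<and> 1 \<le> j \<and> j \<le> int n}"

definition Bpn :: "nat \<Rightarrow> tile set" where
  "Bpn n = {((0,0,i+1),(1,1,1),(0,0,i),(1,1,int n)) | i. 0 \<le> i \<and> i \<le> int n}"

definition Gn :: "nat \<Rightarrow> tile set" where
  "Gn n = {((0,1,i+1),(1,1,1),(0,0,i),(1,1,int n+1)) | i. 0 \<le> i \<and> i \<le> int n}"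

definition Yn :: "nat \<Rightarrow> tile set" where
  "Yn n = {((0,1,i+1),(1,1,2),(0,1,i),(1,1,int n+1)) | i. 1 \<le> i \<and> i \<le> int n}"

definition An :: "nat \<Rightarrow> tile set" where
  "An n = {((0,0,i+1),(1,1,2),(0,1,i),(1,1,int n)) | i. 1 \<le> i \<and> i \<le> int n}"

definition jn :: "nat \<Rightarrow> int \<Rightarrow> int \<Rightarrow> int \<Rightarrow> int \<Rightarrow> tile" where
  "jn n k l r s = ((0,k,l),(0,r,s),(0,s,r + int n),(0,l,k + int n))"

definition KL :: "(int \<times> int) set" where "KL = {(0,0),(0,1),(1,1)}"

definition Jpn :: "nat \<Rightarrow> tile set" where
  "Jpn n = {jn n k l r s | k l r s. (k,l) \<in> KL \<and> (r,s) \<in> KL}"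

definition Tpn :: "nat \<Rightarrow> tile set" where
  "Tpn n = Wn n \<union> Bpn n \<union> Gn n \<union> Yn n \<union> An n
         \<union> hat ` Bpn n \<union> hat ` Gn n \<union> hat ` Yn n \<union> hat ` An n \<union> Jpn n"

definition Omegap :: "nat \<Rightarrow> (int \<times> int \<Rightarrow> tile) set" where
  "Omegap n = {c. (\<forall>m. c m \<in> Tpn n) \<and>
     (\<forall>x y. RIGHT (c (x,y)) = LEFT (c (x+1,y)) \<and> TOP (c (x,y)) = BOTTOM (c (x,y+1)))}"

end

theory Submission
  imports Defs
begin
lemma Tpn_cases:
 assumes "t \<in> Tpn n"
 obtains (W) i j where "t = ((1,1,i+1),(1,1,j+1),(1,1,i),(1,1,j))" "1\<le>i" "i\<le>int n" "1\<le>j" "j\<le>int n"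
 | (B) i where "t = ((0,0,i+1),(1,1,1),(0,0,i),(1,1,int n))" "0\<le>i" "i\<le>int n"
 | (G) i where "t = ((0,1,i+1),(1,1,1),(0,0,i),(1,1,int n+1))" "0\<le>i" "i\<le>int n"
 | (Y) i where "t = ((0,1,i+1),(1,1,2),(0,1,i),(1,1,int n+1))" "1\<le>i" "i\<le>int n"
 | (A) i where "t = ((0,0,i+1),(1,1,2),(0,1,i),(1,1,int n))" "1\<le>i" "i\<le>int n"
 | (hB) i where "t = ((1,1,1),(0,0,i+1),(1,1,int n),(0,0,i))" "0\<le>i" "i\<le>int n"
 | (hG) i where "t = ((1,1,1),(0,1,i+1),(1,1,int n+1),(0,0,i))" "0\<le>i" "i\<le>int n"
 | (hY) i where "t = ((1,1,2),(0,1,i+1),(1,1,int n+1),(0,1,i))" "1\<le>i" "i\<le>int n"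
 | (hA) i where "t = ((1,1,2),(0,0,i+1),(1,1,int n),(0,1,i))" "1\<le>i" "i\<le>int n"
 | (J) k l r s where "t = ((0,k,l),(0,r,s),(0,s,r + int n),(0,l,k + int n))" "(k,l) \<in> {(0,0),(0,1),(1,1)}" "(r,s) \<in> {(0,0),(0,1),(1,1)}"
proof -
  have "t \<in> Wn n \<or> t \<in> Bpn n \<or> t \<in> Gn n \<or> t \<in> Yn n \<or> t \<in> An n \<or> t \<in> hat ` Bpn n \<or> t \<in> hat ` Gn n
     \<or> t \<in> hat ` Yn n \<or> t \<in> hat ` An n \<or> t \<in> Jpn n" using assms unfolding Tpn_def by blast
  then show ?thesis
  proof (elim disjE)
    assume "t \<in> Wn n" then show ?thesis using W unfolding Wn_def by blast
  next
    assume "t \<in> Bpn n" then show ?thesis using B unfolding Bpn_def by blast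
  next
    assume "t \<in> Gn n" then show ?thesis using G unfolding Gn_def by blast
  next
    assume "t \<in> Yn n" then show ?thesis using Y unfolding Yn_def by blast
  next
    assume "t \<in> An n" then show ?thesis using A unfolding An_def by blast
  next
    assume "t \<in> hat ` Bpn n" then show ?thesis using hB unfolding Bpn_def hat_def by auto
  next
    assume "t \<in> hat ` Gn n" then show ?thesis using hG unfolding Gn_def hat_def by auto
  next
    assume "t \<in> hat ` Yn n" then show ?thesis using hY unfolding Yn_def hat_def by auto
  next
    assume "t \<in> hat ` An n" then show ?thesis using hA unfolding An_def hat_def by auto
  next
    assume "t \<in> Jpn n" then show ?thesis using J unfolding Jpn_def jn_def KL_def by blast
  qed
qed
lemmas D = RIGHT_def LEFT_def TOP_def BOTTOM_def

lemma L1: "t \<in> Tpn n \<Longrightarrow> n \<ge> 1 \<Longrightarrow> LEFT t = (0,0,0) \<Longrightarrow> TOP t = (1,1,1) \<and> RIGHT t \<in> {(0,0,1),(0,1,1)}"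
  by (erule Tpn_cases) (auto simp: D)
lemma L2: "t \<in> Tpn n \<Longrightarrow> n \<ge> 2 \<Longrightarrow> BOTTOM t = (0,1,1) \<Longrightarrow> RIGHT t = (1,1,2)"
  by (erule Tpn_cases) (auto simp: D)
lemma L3: "t \<in> Tpn n \<Longrightarrow> LEFT t = (1,1,i) \<Longrightarrow> 2 \<le> i \<Longrightarrow> i \<le> int n \<Longrightarrow> fst (BOTTOM t) = 1 \<Longrightarrow> RIGHT t = (1,1,i+1)"
  by (erule Tpn_cases) (auto simp: D)
lemma L4: "t \<in> Tpn n \<Longrightarrow> LEFT t = (0,x,k) \<Longrightarrow> 1 \<le> k \<Longrightarrow> k \<le> int n - 1 \<Longrightarrow> fst (TOP t) = 1 \<and> RIGHT t \<in> {(0,0,k+1),(0,1,k+1)}"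
  by (erule Tpn_cases) (auto simp: D)
lemma L5: "t \<in> Tpn n \<Longrightarrow> LEFT t = (1,1,int n+1) \<Longrightarrow> fst (BOTTOM t) = 0"
  by (erule Tpn_cases) (auto simp: D)
lemma M1: "t \<in> Tpn 1 \<Longrightarrow> RIGHT t = (0,1,2) \<Longrightarrow> BOTTOM t = (1,1,2)"
  by (erule Tpn_cases) (auto simp: D)
lemma M2: "t \<in> Tpn 1 \<Longrightarrow> TOP t = (0,0,1) \<Longrightarrow> LEFT t \<in> {(1,1,1),(0,1,1)}"
  by (erule Tpn_cases) (auto simp: D)
lemma M3: "t \<in> Tpn 1 \<Longrightarrow> TOP t = (1,1,2) \<Longrightarrow> RIGHT t \<notin> {(1,1,1),(0,1,1)}"
  by (erule Tpn_cases) (auto simp: D)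

lemma jdirs: "RIGHT (jn n 0 0 1 1) = (0,0,0)" "TOP (jn n 0 0 1 1) = (0,1,1)"
  "LEFT (jn n 0 0 1 1) = (0,1,int n+1)" "BOTTOM (jn n 0 0 1 1) = (0,0,int n)"
  by (auto simp: jn_def RIGHT_def TOP_def LEFT_def BOTTOM_def)

lemma main1:
  assumes n: "n \<ge> 1" and c: "c \<in> Omegap n" and j: "c (x0,y0) = jn n 0 0 1 1"
  shows False
proof -
  have T: "\<And>m. c m \<in> Tpn n" and H: "\<And>x y. RIGHT (c (x,y)) = LEFT (c (x+1,y))"
    and V: "\<And>x y. TOP (c (x,y)) = BOTTOM (c (x,y+1))"
    using c by (auto simp: Omegap_def)
  show False
  proof (cases "n = 1")
    case True
    have Tn: "\<And>m. c m \<in> Tpn 1" using T True by simp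
    have d1: "RIGHT (c (x0-1,y0)) = (0,1,2)" using H[of "x0-1" y0] j jdirs(3)[of n] True by simp
    have d2: "BOTTOM (c (x0-1,y0)) = (1,1,2)" using M1[OF Tn d1] .
    have f1: "TOP (c (x0-1,y0-1)) = (1,1,2)" using V[of "x0-1" "y0-1"] d2 by simp
    have e1: "TOP (c (x0,y0-1)) = (0,0,1)" using V[of x0 "y0-1"] j jdirs(4)[of n] True by simp
    have e2: "LEFT (c (x0,y0-1)) \<in> {(1,1,1),(0,1,1)}" using M2[OF Tn e1] .
    have f2: "RIGHT (c (x0-1,y0-1)) = LEFT (c (x0,y0-1))" using H[of "x0-1" "y0-1"] by simp
    show False using M3[OF Tn f1] e2 f2 by simp
  next
    case False
    hence n2: "n \<ge> 2" using n by simp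
    have inv: "1 \<le> k \<longrightarrow> int k \<le> int n - 1 \<longrightarrow>
       RIGHT (c (x0 + int k, y0)) \<in> {(0,0,int k),(0,1,int k)} \<and> RIGHT (c (x0 + int k, y0+1)) = (1,1,int k+2)" for k
    proof (induction k)
      case 0 then show ?case by simp
    next
      case (Suc k)
      show ?case
      proof (cases "k = 0")
        case True
        have a1: "LEFT (c (x0+1,y0)) = (0,0,0)" using H[of x0 y0] j jdirs(1) by simp
        have a2: "TOP (c (x0+1,y0)) = (1,1,1) \<and> RIGHT (c (x0+1,y0)) \<in> {(0,0,1),(0,1,1)}"
          using L1[OF T n a1] .
        have b0: "BOTTOM (c (x0,y0+1)) = (0,1,1)" using V[of x0 y0] j jdirs(2) by simp
        have b1: "LEFT (c (x0+1,y0+1)) = (1,1,2)" using H[of x0 "y0+1"] L2[OF T n2 b0] by simp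
        have b2: "fst (BOTTOM (c (x0+1,y0+1))) = 1" using V[of "x0+1" y0] a2 by (metis fst_conv)
        have b3: "RIGHT (c (x0+1,y0+1)) = (1,1,3)" using L3[OF T b1 _ _ b2] n2 by simp
        show ?thesis using True a2 b3 by simp
      next
        case False
        show ?thesis
        proof (intro impI)
          assume "int (Suc k) \<le> int n - 1"
          hence kk: "int k \<le> int n - 1" "int k + 1 \<le> int n - 1" by auto
          from Suc.IH False kk obtain x where
            ra: "RIGHT (c (x0 + int k, y0)) = (0,x,int k)" and rb: "RIGHT (c (x0 + int k, y0+1)) = (1,1,int k+2)"
            by auto
          have a1: "LEFT (c (x0+int k+1,y0)) = (0,x,int k)" using H[of "x0+int k" y0] ra by simp
          have a2: "fst (TOP (c (x0+int k+1,y0))) = 1 \<and> RIGHT (c (x0+int k+1,y0)) \<in> {(0,0,int k+1),(0,1,int k+1)}"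
            using L4[OF T a1] False kk by simp
          have b1: "LEFT (c (x0+int k+1,y0+1)) = (1,1,int k+2)" using H[of "x0+int k" "y0+1"] rb by simp
          have b2: "fst (BOTTOM (c (x0+int k+1,y0+1))) = 1" using V[of "x0+int k+1" y0] a2 by simp
          have b3: "RIGHT (c (x0+int k+1,y0+1)) = (1,1,int k+2+1)" using L3[OF T b1 _ _ b2] kk by simp
          have eq: "x0 + int (Suc k) = x0 + int k + 1" "int (Suc k) = int k + 1" by simp_all
          have eq1: "x0 + (int k + 1) = x0 + int k + 1" by simp
          have b3': "RIGHT (c (x0+int k+1,y0+1)) = (1,1,int k+1+2)" using b3 by simp
          show "RIGHT (c (x0 + int (Suc k), y0)) \<in> {(0,0,int (Suc k)),(0,1,int (Suc k))} \<and>
                RIGHT (c (x0 + int (Suc k), y0+1)) = (1,1,int (Suc k)+2)"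
            unfolding eq(2) eq1 using a2 b3' by blast
        qed
      qed
    qed
    have I: "RIGHT (c (x0 + int (n-1), y0)) \<in> {(0,0,int (n-1)),(0,1,int (n-1))} \<and> RIGHT (c (x0 + int (n-1), y0+1)) = (1,1,int (n-1)+2)"
      using inv[of "n-1"] n2 by simp
    then obtain x where ra: "RIGHT (c (x0 + int (n-1), y0)) = (0,x,int n - 1)"
      and rb: "RIGHT (c (x0 + int (n-1), y0+1)) = (1,1,int n+1)" using n2 by auto
    have a1: "LEFT (c (x0+int n,y0)) = (0,x,int n - 1)" using H[of "x0+int (n-1)" y0] ra n2 by simp
    have a2: "fst (TOP (c (x0+int n,y0))) = 1" using L4[OF T a1] n2 by simp
    have b1: "LEFT (c (x0+int n,y0+1)) = (1,1,int n+1)" using H[of "x0+int (n-1)" "y0+1"] rb n2 by simp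
    have b2: "fst (BOTTOM (c (x0+int n,y0+1))) = 0" using L5[OF T b1] .
    show False using V[of "x0+int n" y0] a2 b2 by simp
  qed
qed

lemma hathat: "hat (hat t) = t" by (cases t) (auto simp: hat_def)
lemma hatdirs: "RIGHT (hat t) = TOP t" "TOP (hat t) = RIGHT t" "LEFT (hat t) = BOTTOM t" "BOTTOM (hat t) = LEFT t"
  by (cases t; auto simp: hat_def RIGHT_def TOP_def LEFT_def BOTTOM_def)+
lemma hatW: "t \<in> Wn n \<Longrightarrow> hat t \<in> Wn n" by (auto simp: Wn_def hat_def)
lemma hatJ: "t \<in> Jpn n \<Longrightarrow> hat t \<in> Jpn n" by (auto simp: Jpn_def jn_def hat_def)
lemma hatT: "t \<in> Tpn n \<Longrightarrow> hat t \<in> Tpn n"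
proof -
  assume "t \<in> Tpn n"
  then consider "t \<in> Wn n" | "t \<in> Jpn n" | "t \<in> Bpn n \<union> Gn n \<union> Yn n \<union> An n"
    | "t \<in> hat ` (Bpn n \<union> Gn n \<union> Yn n \<union> An n)"
    unfolding Tpn_def by blast
  then show ?thesis
  proof cases
    case 1 then show ?thesis using hatW unfolding Tpn_def by blast
  next
    case 2 then show ?thesis using hatJ unfolding Tpn_def by blast
  next
    case 3 then show ?thesis unfolding Tpn_def by blast
  next
    case 4 then show ?thesis using hathat unfolding Tpn_def by auto
  qed
qed
lemma hatj: "hat (jn n 1 1 0 0) = jn n 0 0 1 1" by (simp add: hat_def jn_def)

theorem lemma7p3:
  fixes n :: nat and c :: "int \<times> int \<Rightarrow> tile"
  assumes "n \<ge> 1" and "c \<in> Omegap n"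
  shows "\<forall>m. c m \<noteq> jn n 0 0 1 1 \<and> c m \<noteq> jn n 1 1 0 0"
proof
  fix m :: "int \<times> int"
  obtain x0 y0 where m: "m = (x0,y0)" by (cases m)
  have T: "\<And>m. c m \<in> Tpn n" and H: "\<And>x y. RIGHT (c (x,y)) = LEFT (c (x+1,y))"
    and V: "\<And>x y. TOP (c (x,y)) = BOTTOM (c (x,y+1))"
    using assms(2) by (auto simp: Omegap_def)
  define c' where "c' = (\<lambda>(x,y). hat (c (y,x)))"
  have c': "c' \<in> Omegap n"
    unfolding Omegap_def c'_def using T H V by (auto simp: hatT hatdirs)
  have 1: "c m \<noteq> jn n 0 0 1 1" using main1[OF assms(1,2)] m by blast
  have 2: "c m \<noteq> jn n 1 1 0 0"
  proof
    assume "c m = jn n 1 1 0 0"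
    hence "c' (y0,x0) = jn n 0 0 1 1" using m hatj by (simp add: c'_def)
    thus False using main1[OF assms(1) c'] by blast
  qed
  show "c m \<noteq> jn n 0 0 1 1 \<and> c m \<noteq> jn n 1 1 0 0" using 1 2 by blast
qed

end
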